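(* Let $k$ be a field, $n\ge2$, $d\ge2$, and $\mathbf{m}\in\mathbb{N}^n$ with $|\mathbf{m}|=d$. The ring $\mathcal{P}_{2,2,(1,1)}$ is normal. For all other $(n,d,\mathbf{m})$, the normalization (integral closure in its fraction field) of $\mathcal{P}_{n,d,\mathbf{m}}$ is $V_{n,d}$ if $\max(\mathbf{m})<d$, and is $\mathcal{P}_{n,d,\mathbf{m}}$ itself (i.e. $\mathcal{P}_{n,d,\mathbf{m}}$ is normal) if $\max(\mathbf{m})=d$.
   Context: Let $k$ be a field and $S=k[x_1,\dots,x_n]$. For $\mathbf{a}\in\mathbb{N}^n$ write $|\mathbf{a}|=\sum_i a_i$, $\max(\mathbf{a})=\max_i a_i$, and $x^{\mathbf{a}}=x_1^{a_1}\cdots x_n^{a_n}$. Let $T_{n,d}=\{\mathbf{a}\in\mathbb{N}^n : |\mathbf{a}|=d\}$, $\mathcal{A}_{n,d}$ the semigroup generated by $T_{n,d}$, and for a semigroup $A\subseteq\mathbb{N}^n$, $k[A]$ the $k$-span of $\{x^{\mathbf{a}}:\mathbf{a}\in A\}$. $V_{n,d}=k[\mathcal{A}_{n,d}]$. For $\mathbf{m}\in T_{n,d}$, $\mathcal{A}_{n,d,\mathbf{m}}$ is the semigroup generated by $T_{n,d}\setminus\{\mathbf{m}\}$ and $\mathcal{P}_{n,d,\mathbf{m}}=k[\mathcal{A}_{n,d,\mathbf{m}}]$ (the pinched Veronese ring). *)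

theory Defs
  imports "HOL-Library.Poly_Mapping" "HOL-Computational_Algebra.Fraction_Field"
begin

(* Exponent vectors a in N^n are finitely supported maps nat \<Rightarrow>\<^sub>0 nat with support in {..<n}.
   The polynomial ring S = k[x_0,...,x_{n-1}] sits inside (nat \<Rightarrow>\<^sub>0 nat) \<Rightarrow>\<^sub>0 'k
   (coefficient maps, convolution product); the monomial x^a is Poly_Mapping.single a 1. *)

definition total_deg :: "nat \<Rightarrow> (nat \<Rightarrow>\<^sub>0 nat) \<Rightarrow> nat" where
  "total_deg n a = (\<Sum>i<n. Poly_Mapping.lookup a i)"

definition max_exp :: "nat \<Rightarrow> (nat \<Rightarrow>\<^sub>0 nat) \<Rightarrow> nat" where
  "max_exp n a = Max (Poly_Mapping.lookup a ` {..<n})"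

definition T_exps :: "nat \<Rightarrow> nat \<Rightarrow> (nat \<Rightarrow>\<^sub>0 nat) set" where
  "T_exps n d = {a. Poly_Mapping.keys a \<subseteq> {..<n} \<and> total_deg n a = d}"

inductive_set semigroup_gen :: "(nat \<Rightarrow>\<^sub>0 nat) set \<Rightarrow> (nat \<Rightarrow>\<^sub>0 nat) set" for G where
  zero: "0 \<in> semigroup_gen G"
| add: "a \<in> G \<Longrightarrow> b \<in> semigroup_gen G \<Longrightarrow> a + b \<in> semigroup_gen G"

definition monomial_ring :: "(nat \<Rightarrow>\<^sub>0 nat) set \<Rightarrow> ((nat \<Rightarrow>\<^sub>0 nat) \<Rightarrow>\<^sub>0 'k::field) set" where
  "monomial_ring A = {p. Poly_Mapping.keys p \<subseteq> A}"

definition veronese :: "nat \<Rightarrow> nat \<Rightarrow> ((nat \<Rightarrow>\<^sub>0 nat) \<Rightarrow>\<^sub>0 'k::field) set" where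
  "veronese n d = monomial_ring (semigroup_gen (T_exps n d))"

definition pinched_veronese :: "nat \<Rightarrow> nat \<Rightarrow> (nat \<Rightarrow>\<^sub>0 nat) \<Rightarrow> ((nat \<Rightarrow>\<^sub>0 nat) \<Rightarrow>\<^sub>0 'k::field) set" where
  "pinched_veronese n d m = monomial_ring (semigroup_gen (T_exps n d - {m}))"

(* fraction field of a subdomain R of S, realised inside Frac(S) *)
definition frac_field :: "'a::idom set \<Rightarrow> 'a fract set" where
  "frac_field R = {Fract a b | a b. a \<in> R \<and> b \<in> R \<and> b \<noteq> 0}"

definition integral_over :: "'a::idom set \<Rightarrow> 'a fract \<Rightarrow> bool" where
  "integral_over R z \<longleftrightarrow> (\<exists>N c. (\<forall>i<N. c i \<in> R) \<and> z ^ N + (\<Sum>i<N. Fract (c i) 1 * z ^ i) = 0)"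

definition normalization :: "'a::idom set \<Rightarrow> 'a fract set" where
  "normalization R = {z \<in> frac_field R. integral_over R z}"

definition embed :: "'a::idom set \<Rightarrow> 'a fract set" where
  "embed R = (\<lambda>a. Fract a 1) ` R"

definition is_normal :: "'a::idom set \<Rightarrow> bool" where
  "is_normal R \<longleftrightarrow> normalization R = embed R"

end

theory Submission
  imports Defs "HOL-Computational_Algebra.Polynomial_Factorial"
begin

instantiation fract ::
  (idom) "{unique_euclidean_ring, normalization_euclidean_semiring, normalization_semidom_multiplicative}"
begin
definition [simp]: "normalize_fract (x::'a fract) = (if x = 0 then 0 else (1::'a fract))"
definition [simp]: "unit_factor_fract (x::'a fract) = x"
definition [simp]: "modulo_fract (x::'a fract) (y::'a fract) = (if y = 0 then x else 0)"
definition [simp]: "euclidean_size_fract (x::'a fract) = (if x = 0 then 0 else (1::nat))"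
definition [simp]: "division_segment (x :: 'a fract) = 1"
instance
  by standard
    (simp_all add: dvd_field_iff field_split_simps split: if_splits)
end

instantiation fract :: (idom) euclidean_ring_gcd
begin
definition gcd_fract :: "'a fract \<Rightarrow> 'a fract \<Rightarrow> 'a fract" where
  "gcd_fract = Euclidean_Algorithm.gcd"
definition lcm_fract :: "'a fract \<Rightarrow> 'a fract \<Rightarrow> 'a fract" where
  "lcm_fract = Euclidean_Algorithm.lcm"
definition Gcd_fract :: "'a fract set \<Rightarrow> 'a fract" where
 "Gcd_fract = Euclidean_Algorithm.Gcd"
definition Lcm_fract :: "'a fract set \<Rightarrow> 'a fract" where
 "Lcm_fract = Euclidean_Algorithm.Lcm"
instance by standard (simp_all add: gcd_fract_def lcm_fract_def Gcd_fract_def Lcm_fract_def)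
end

instance fract :: (idom) field_gcd ..

lemma test: "gcd (x::('a::idom fract) poly) x = normalize x" by auto


type_synonym 'k mp = "(nat \<Rightarrow>\<^sub>0 nat) \<Rightarrow>\<^sub>0 'k"

definition clr :: "nat \<Rightarrow> (nat \<Rightarrow>\<^sub>0 nat) \<Rightarrow> (nat \<Rightarrow>\<^sub>0 nat)" where
  "clr j a = Poly_Mapping.update j 0 a"

definition Phi :: "nat \<Rightarrow> 'k::field mp \<Rightarrow> 'k mp poly" where
  "Phi j h = (\<Sum>a\<in>Poly_Mapping.keys h. monom (Poly_Mapping.single (clr j a) (Poly_Mapping.lookup h a)) (Poly_Mapping.lookup a j))"

lemma lookup_clr: "Poly_Mapping.lookup (clr j a) i = (if i = j then 0 else Poly_Mapping.lookup a i)"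
  by (simp add: clr_def lookup_update)

lemma clr_add: "clr j (a + b) = clr j a + clr j b"
  by (rule poly_mapping_eqI) (simp add: lookup_clr lookup_add)

lemma clr_decomp: "clr j a + Poly_Mapping.single j (Poly_Mapping.lookup a j) = a"
  by (rule poly_mapping_eqI) (simp add: lookup_clr lookup_add lookup_single)

lemma cond_iff: "(Poly_Mapping.lookup a j = i \<and> clr j a = b) \<longleftrightarrow>
   (Poly_Mapping.lookup b j = 0 \<and> a = b + Poly_Mapping.single j i)"
proof
  assume H: "Poly_Mapping.lookup a j = i \<and> clr j a = b"
  then have "Poly_Mapping.lookup b j = 0" using lookup_clr[of j a j] by simp
  moreover have "a = b + Poly_Mapping.single j i" using clr_decomp[of j a] H by simp
  ultimately show "Poly_Mapping.lookup b j = 0 \<and> a = b + Poly_Mapping.single j i" by simp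
next
  assume H: "Poly_Mapping.lookup b j = 0 \<and> a = b + Poly_Mapping.single j i"
  then show "Poly_Mapping.lookup a j = i \<and> clr j a = b"
    by (auto simp: lookup_add lookup_single intro!: poly_mapping_eqI simp: lookup_clr)
qed

lemma lookup_coeff_Phi:
  "Poly_Mapping.lookup (coeff (Phi j h) i) b =
    (if Poly_Mapping.lookup b j = 0 then Poly_Mapping.lookup h (b + Poly_Mapping.single j i) else 0)"
proof -
  have "Poly_Mapping.lookup (coeff (Phi j h) i) b =
     (\<Sum>a\<in>Poly_Mapping.keys h. if (Poly_Mapping.lookup a j = i \<and> clr j a = b) then Poly_Mapping.lookup h a else 0)"
    unfolding Phi_def coeff_sum lookup_sum
    by (rule sum.cong) (auto simp: coeff_monom lookup_single when_def)
  also have "\<dots> = (\<Sum>a\<in>Poly_Mapping.keys h. if Poly_Mapping.lookup b j = 0 \<and> a = b + Poly_Mapping.single j i then Poly_Mapping.lookup h a else 0)"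
    using cond_iff by presburger
  also have "\<dots> = (if Poly_Mapping.lookup b j = 0 then Poly_Mapping.lookup h (b + Poly_Mapping.single j i) else 0)"
    by (cases "Poly_Mapping.lookup b j = 0") (auto simp: sum.delta' in_keys_iff)
  finally show ?thesis .
qed

lemma Phi_add: "Phi j (x + y) = Phi j x + Phi j y"
  by (rule poly_eqI, rule poly_mapping_eqI) (simp add: lookup_coeff_Phi lookup_add)

lemma Phi_zero [simp]: "Phi j 0 = 0"
  by (simp add: Phi_def)

lemma Phi_sum: "Phi j (sum f A) = (\<Sum>a\<in>A. Phi j (f a))"
  by (induction A rule: infinite_finite_induct) (auto simp: Phi_add)

lemma Phi_single: "Phi j (Poly_Mapping.single a c) = monom (Poly_Mapping.single (clr j a) c) (Poly_Mapping.lookup a j)"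
  by (cases "c = 0") (simp_all add: Phi_def)

lemma pm_sum_single: "(h::'a \<Rightarrow>\<^sub>0 'b::comm_monoid_add) = (\<Sum>a\<in>Poly_Mapping.keys h. Poly_Mapping.single a (Poly_Mapping.lookup h a))"
  by (rule poly_mapping_eqI) (simp add: lookup_sum lookup_single when_def sum.delta in_keys_iff)

lemma Phi_single_mult:
  "Phi j (Poly_Mapping.single a c * Poly_Mapping.single b d) = Phi j (Poly_Mapping.single a c) * Phi j (Poly_Mapping.single b d)"
  by (simp add: mult_single Phi_single mult_monom clr_add lookup_add)

lemma Phi_mult: "Phi j (x * y) = Phi j x * Phi j y"
proof -
  have "x * y = (\<Sum>a\<in>Poly_Mapping.keys x. \<Sum>b\<in>Poly_Mapping.keys y.
      Poly_Mapping.single a (Poly_Mapping.lookup x a) * Poly_Mapping.single b (Poly_Mapping.lookup y b))"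
    by (subst pm_sum_single[of x], subst pm_sum_single[of y]) (simp add: sum_product)
  then have "Phi j (x * y) = (\<Sum>a\<in>Poly_Mapping.keys x. \<Sum>b\<in>Poly_Mapping.keys y.
      Phi j (Poly_Mapping.single a (Poly_Mapping.lookup x a)) * Phi j (Poly_Mapping.single b (Poly_Mapping.lookup y b)))"
    by (simp add: Phi_sum Phi_single_mult)
  also have "\<dots> = Phi j x * Phi j y"
    by (subst (3) pm_sum_single[of x], subst (3) pm_sum_single[of y]) (simp add: Phi_sum sum_product)
  finally show ?thesis .
qed

lemma Phi_one: "Phi j 1 = 1"
proof -
  have "Phi j (1::'a::field mp) = Phi j (Poly_Mapping.single 0 1)" by simp
  also have "\<dots> = monom (Poly_Mapping.single (clr j 0) 1) 0" by (simp only: Phi_single) simp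
  also have "clr j 0 = 0" by (rule poly_mapping_eqI) (simp add: lookup_clr)
  finally show ?thesis by (simp add: monom_0 one_pCons)
qed

lemma Phi_power: "Phi j (x ^ k) = Phi j x ^ k"
  by (induction k) (simp_all add: Phi_one Phi_mult)

definition Psi :: "nat \<Rightarrow> 'k::field mp poly \<Rightarrow> 'k mp" where
  "Psi j q = poly q (Poly_Mapping.single (Poly_Mapping.single j 1) 1)"

lemma single_pow: "(Poly_Mapping.single (Poly_Mapping.single j 1) (1::'k::field)) ^ k = Poly_Mapping.single (Poly_Mapping.single j k) 1"
proof (induction k)
  case 0 then show ?case by simp
next
  case (Suc k)
  have "Poly_Mapping.single j (Suc k) = Poly_Mapping.single j 1 + Poly_Mapping.single j k"
    by (simp add: single_add[symmetric])
  then show ?case using Suc by (simp add: mult_single)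
qed

lemma Psi_Phi: "Psi j (Phi j (h::'k::field mp)) = h"
proof -
  have "Psi j (Phi j h) = (\<Sum>a\<in>Poly_Mapping.keys h. Poly_Mapping.single (clr j a) (Poly_Mapping.lookup h a) *
      Poly_Mapping.single (Poly_Mapping.single j 1) 1 ^ Poly_Mapping.lookup a j)"
    by (simp add: Psi_def Phi_def poly_sum poly_monom)
  also have "\<dots> = (\<Sum>a\<in>Poly_Mapping.keys h. Poly_Mapping.single a (Poly_Mapping.lookup h a))"
    by (rule sum.cong[OF refl]) (simp only: single_pow mult_single clr_decomp mult_1_right)
  also have "\<dots> = h" by (rule pm_sum_single[symmetric])
  finally show ?thesis .
qed

lemma Phi_inj: "Phi j x = 0 \<longleftrightarrow> x = 0"
  by (metis Phi_zero Psi_Phi)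

lemma Psi_mult: "Psi j (p * q) = Psi j p * Psi j q"
  by (simp add: Psi_def poly_mult)

lemma Psi_smult: "Psi j (smult c p) = c * Psi j p"
  by (simp add: Psi_def)


lemma rr_lemma:
  fixes f g :: "'a::factorial_ring_gcd"
  assumes g: "g \<noteq> 0" and E: "f^N + (\<Sum>i<N. c i * f^i * g^(N-i)) = 0"
  shows "g dvd f"
proof -
  have gcd0: "gcd f g \<noteq> 0" using g by simp
  then obtain a b where ab: "f = a * gcd f g" "g = b * gcd f g" "coprime a b"
    using gcd_coprime_exists by blast
  define h where "h = gcd f g"
  have N: "N > 0"
  proof (rule ccontr)
    assume "\<not> N > 0" then have "N = 0" by simp
    with E show False by simp
  qed
  have "h^N * (a^N + (\<Sum>i<N. c i * a^i * b^(N-i))) = 0"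
  proof -
    have "h^N * (a^N + (\<Sum>i<N. c i * a^i * b^(N-i)))
        = (a*h)^N + (\<Sum>i<N. c i * (a*h)^i * (b*h)^(N-i))"
    proof -
      have "\<And>i. i < N \<Longrightarrow> h^N * (c i * a^i * b^(N-i)) = c i * (a*h)^i * (b*h)^(N-i)"
      proof -
        fix i assume "i < N"
        then have "h^N = h^i * h^(N-i)" by (simp add: power_add[symmetric])
        then show "h^N * (c i * a^i * b^(N-i)) = c i * (a*h)^i * (b*h)^(N-i)"
          by (simp add: power_mult_distrib algebra_simps)
      qed
      note pw = this
      have "h^N * (\<Sum>i<N. c i * a^i * b^(N-i)) = (\<Sum>i<N. c i * (a*h)^i * (b*h)^(N-i))"
        unfolding sum_distrib_left by (rule sum.cong[OF refl]) (simp add: pw)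
      moreover have "h^N * a^N = (a*h)^N" by (simp add: power_mult_distrib)
      ultimately show ?thesis by (simp add: distrib_left)
    qed
    also have "\<dots> = 0" using E ab unfolding h_def by simp
    finally show ?thesis .
  qed
  moreover have "h \<noteq> 0" using gcd0 h_def by simp
  ultimately have E': "a^N + (\<Sum>i<N. c i * a^i * b^(N-i)) = 0" by simp
  have "b dvd (\<Sum>i<N. c i * a^i * b^(N-i))"
  proof (rule dvd_sum)
    fix i assume "i \<in> {..<N}"
    then have "N - i = Suc (N - i - 1)" by simp
    then show "b dvd c i * a^i * b^(N-i)" by (metis dvd_mult dvd_triv_left power_Suc)
  qed
  then have "b dvd a^N" using E' by (metis add.commute add_eq_0_iff dvd_minus_iff)
  moreover have "coprime b (a^N)" using ab(3) by (simp add: coprime_commute)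
  ultimately have "is_unit b" by (meson coprime_absorb_left)
  then show ?thesis using ab by (metis dvd_mult_right mult.commute unit_dvdE is_unit_mult_iff dvd_refl mult_dvd_mono unit_imp_dvd dvd_mult)
qed

definition vars :: "'k::field mp \<Rightarrow> nat set" where
  "vars h = (\<Union>a\<in>Poly_Mapping.keys h. Poly_Mapping.keys a)"

lemma finite_vars: "finite (vars h)"
  by (simp add: vars_def)

lemma keys_add_nat: "Poly_Mapping.keys (a + b :: nat \<Rightarrow>\<^sub>0 nat) = Poly_Mapping.keys a \<union> Poly_Mapping.keys b"
  by (auto simp: in_keys_iff lookup_add)

lemma vars_mult: "vars (x * y) \<subseteq> vars x \<union> vars y"
  using keys_mult[of x y] by (fastforce simp: vars_def keys_add_nat)

lemma vars_one: "vars (1::'k::field mp) = {}"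
  by (simp add: vars_def)

lemma vars_power: "vars (x ^ k) \<subseteq> vars x"
proof (induction k)
  case 0 then show ?case by (simp add: vars_one)
next
  case (Suc k) then show ?case using vars_mult[of x "x^k"] by auto
qed

lemma vars_coeff_Phi: "vars (coeff (Phi j h) i) \<subseteq> vars h - {j}"
proof
  fix v assume "v \<in> vars (coeff (Phi j h) i)"
  then obtain b where b: "b \<in> Poly_Mapping.keys (coeff (Phi j h) i)" "v \<in> Poly_Mapping.keys b"
    by (auto simp: vars_def)
  then have "Poly_Mapping.lookup b j = 0" "b + Poly_Mapping.single j i \<in> Poly_Mapping.keys h"
    by (auto simp: in_keys_iff lookup_coeff_Phi split: if_splits)
  moreover have "v \<in> Poly_Mapping.keys (b + Poly_Mapping.single j i)"
    using b(2) by (simp add: keys_add_nat)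
  ultimately show "v \<in> vars h - {j}"
    using b(2) by (auto simp: vars_def in_keys_iff)
qed

lemma vars_empty: assumes "vars h = {}" shows "h = Poly_Mapping.single 0 (Poly_Mapping.lookup h 0)"
proof -
  have "\<forall>a\<in>Poly_Mapping.keys h. a = 0"
    using assms by (auto simp: vars_def)
  then show ?thesis
    by (intro poly_mapping_eqI) (auto simp: lookup_single when_def in_keys_iff)
qed

lemma to_fract_power: "to_fract (x ^ k) = to_fract x ^ k"
  by (induction k) simp_all

lemma clear_denoms:
  fixes z :: "'a::idom fract"
  assumes int: "z^N + (\<Sum>i<N. to_fract (c i) * z^i) = 0"
    and zg: "z * to_fract g = to_fract f"
  shows "f^N + (\<Sum>i<N. c i * f^i * g^(N-i)) = 0"
proof -
  define G where "G = to_fract g"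
  have pw: "\<And>i. i < N \<Longrightarrow> G^N * (to_fract (c i) * z^i) = to_fract (c i) * (z*G)^i * G^(N-i)"
  proof -
    fix i assume "i < N"
    then have "G^N = G^i * G^(N-i)" by (simp add: power_add[symmetric])
    then show "G^N * (to_fract (c i) * z^i) = to_fract (c i) * (z*G)^i * G^(N-i)"
      by (simp add: power_mult_distrib algebra_simps)
  qed
  have "to_fract (f^N + (\<Sum>i<N. c i * f^i * g^(N-i))) = (z*G)^N + (\<Sum>i<N. to_fract (c i) * (z*G)^i * G^(N-i))"
    using zg by (simp add: G_def to_fract_power)
  also have "\<dots> = G^N * (z^N + (\<Sum>i<N. to_fract (c i) * z^i))"
  proof -
    have "G^N * (\<Sum>i<N. to_fract (c i) * z^i) = (\<Sum>i<N. to_fract (c i) * (z*G)^i * G^(N-i))"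
      unfolding sum_distrib_left by (rule sum.cong[OF refl]) (simp add: pw)
    moreover have "(z*G)^N = G^N * z^N" by (simp add: power_mult_distrib mult.commute)
    ultimately show ?thesis by (simp only: distrib_left)
  qed
  also have "\<dots> = 0" using int by simp
  finally have "to_fract (f^N + (\<Sum>i<N. c i * f^i * g^(N-i))) = 0" .
  then show ?thesis by (simp only: to_fract_eq_0_iff)
qed

lemma fract_poly_sum: "fract_poly (sum f A) = (\<Sum>a\<in>A. fract_poly (f a))"
  by (induction A rule: infinite_finite_induct) simp_all

lemma fract_poly_power: "fract_poly (p ^ k) = fract_poly p ^ k"
  by (induction k) simp_all

lemma S_normal_aux:
  fixes z :: "'k::field mp fract"
  assumes int: "z^N + (\<Sum>i<N. to_fract (c i) * z^i) = 0"
  shows "card (vars g) = K \<Longrightarrow> g \<noteq> 0 \<Longrightarrow> z * to_fract g = to_fract f \<Longrightarrow> \<exists>h. z = to_fract h"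
proof (induction K arbitrary: f g rule: less_induct)
  case (less K)
  show ?case
  proof (cases "vars g = {}")
    case True
    define c0 where "c0 = Poly_Mapping.lookup g 0"
    have g: "g = Poly_Mapping.single 0 c0" using vars_empty[OF True] c0_def by simp
    then have c0: "c0 \<noteq> 0" using less.prems by auto
    have "Poly_Mapping.single 0 (inverse c0) * g = 1"
      using c0 g by (simp add: mult_single)
    then have inv: "to_fract g * to_fract (Poly_Mapping.single 0 (inverse c0)) = 1"
      by (metis mult.commute to_fract_1 to_fract_mult)
    have "z = z * (to_fract g * to_fract (Poly_Mapping.single 0 (inverse c0)))"
      by (simp only: inv mult_1_right)
    also have "\<dots> = (z * to_fract g) * to_fract (Poly_Mapping.single 0 (inverse c0))"
      by (simp only: mult.assoc)
    also have "\<dots> = to_fract (f * Poly_Mapping.single 0 (inverse c0))"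
      using less.prems(3) by (simp only: to_fract_mult)
    finally have "z = to_fract (f * Poly_Mapping.single 0 (inverse c0))" .
    then show ?thesis by blast
  next
    case False
    then obtain j where j: "j \<in> vars g" by blast
    have E: "f^N + (\<Sum>i<N. c i * f^i * g^(N-i)) = 0"
      using clear_denoms[OF int less.prems(3)] .
    define Pf where "Pf = Phi j f"
    define Pg where "Pg = Phi j g"
    have Pg0: "Pg \<noteq> 0" using less.prems Phi_inj Pg_def by metis
    have "Phi j (f^N + (\<Sum>i<N. c i * f^i * g^(N-i))) = Pf^N + (\<Sum>i<N. Phi j (c i) * Pf^i * Pg^(N-i))"
      by (simp add: Pf_def Pg_def Phi_add Phi_sum Phi_mult Phi_power)
    then have "Pf^N + (\<Sum>i<N. Phi j (c i) * Pf^i * Pg^(N-i)) = 0" using E by simp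
    then have "fract_poly (Pf^N + (\<Sum>i<N. Phi j (c i) * Pf^i * Pg^(N-i))) = 0" by simp
    then have "fract_poly Pf ^ N + (\<Sum>i<N. fract_poly (Phi j (c i)) * fract_poly Pf ^ i * fract_poly Pg ^ (N-i)) = 0"
      by (simp add: fract_poly_power fract_poly_sum)
    then have dv: "fract_poly Pg dvd fract_poly Pf"
      using rr_lemma[of "fract_poly Pg"] Pg0 by simp
    obtain q r where qr: "pseudo_divmod Pf Pg = (q, r)" by fastforce
    define l where "l = lead_coeff Pg ^ (Suc (degree Pf) - degree Pg)"
    have eq: "smult l Pf = Pg * q + r" using pseudo_divmod(1)[OF Pg0 qr] l_def by simp
    have r: "r = 0 \<or> degree r < degree Pg" using pseudo_divmod(2)[OF Pg0 qr] .
    have r0: "r = 0"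
    proof (rule ccontr)
      assume "r \<noteq> 0"
      with r have dr: "degree r < degree Pg" by simp
      have "fract_poly r = smult (to_fract l) (fract_poly Pf) - fract_poly Pg * fract_poly q"
        using arg_cong[OF eq, of fract_poly] by simp
      moreover have "fract_poly Pg dvd smult (to_fract l) (fract_poly Pf) - fract_poly Pg * fract_poly q"
        using dv by (simp add: dvd_diff dvd_smult)
      ultimately have "fract_poly Pg dvd fract_poly r" by simp
      then have "degree (fract_poly Pg) \<le> degree (fract_poly r)"
        using \<open>r \<noteq> 0\<close> by (intro dvd_imp_degree_le) simp_all
      with dr show False by (simp add: degree_map_poly)
    qed
    have l0: "l \<noteq> 0" using Pg0 by (simp add: l_def)
    have "Psi j (smult l Pf) = Psi j (Pg * q)" using eq r0 by simp
    then have lf: "l * f = g * Psi j q"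
      by (simp add: Psi_smult Psi_mult Pf_def Pg_def Psi_Phi)
    have "z * to_fract l = to_fract (Psi j q)"
    proof -
      have G0: "to_fract g \<noteq> 0" using less.prems(2) by simp
      have zq: "z = to_fract f / to_fract g" using less.prems(3) G0 by (simp add: eq_divide_eq)
      have "z * to_fract l = to_fract (l * f) / to_fract g" unfolding zq by (simp add: mult.commute)
      also have "\<dots> = to_fract (g * Psi j q) / to_fract g" by (simp only: lf)
      also have "\<dots> = to_fract (Psi j q)" using G0 by simp
      finally show ?thesis .
    qed
    moreover have "vars l \<subseteq> vars g - {j}"
      using vars_power[of "lead_coeff Pg"] vars_coeff_Phi[of j g] unfolding l_def Pg_def by blast
    then have "card (vars l) \<le> card (vars g - {j})"
      using finite_vars[of g] by (intro card_mono) auto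
    moreover have "card (vars g - {j}) < card (vars g)"
      using j finite_vars[of g] by (rule card_Diff1_less[rotated])
    ultimately have "card (vars l) < K" using less.prems(1) by linarith
    from less.IH[OF this refl l0] \<open>z * to_fract l = to_fract (Psi j q)\<close>
    show ?thesis by blast
  qed
qed

lemma S_normal:
  fixes z :: "'k::field mp fract"
  assumes int: "z^N + (\<Sum>i<N. to_fract (c i) * z^i) = 0"
    and "g \<noteq> 0" "z * to_fract g = to_fract f"
  shows "\<exists>h. z = to_fract h"
  using S_normal_aux[OF int refl assms(2,3)] .


definition restr :: "('a \<Rightarrow> bool) \<Rightarrow> ('a \<Rightarrow>\<^sub>0 'b::zero) \<Rightarrow> ('a \<Rightarrow>\<^sub>0 'b)" where
  "restr Q h = Poly_Mapping.mapp (\<lambda>a c. if Q a then c else 0) h"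

lemma lookup_restr: "Poly_Mapping.lookup (restr Q h) a = (if Q a then Poly_Mapping.lookup h a else 0)"
  by (auto simp: restr_def lookup_mapp when_def in_keys_iff)

lemma keys_restr: "Poly_Mapping.keys (restr Q h) = {a \<in> Poly_Mapping.keys h. Q a}"
  by (auto simp: in_keys_iff lookup_restr split: if_splits)

lemma grading:
  fixes h g f :: "('a::{ordered_cancel_comm_monoid_add,linorder}) \<Rightarrow>\<^sub>0 'b::idom"
  assumes Q1: "\<And>a b. Q a \<Longrightarrow> Q b \<Longrightarrow> Q (a+b)"
    and Q2: "\<And>a b. \<not> Q a \<Longrightarrow> Q b \<Longrightarrow> \<not> Q (a+b)"
    and hg: "h * g = f" and g0: "g \<noteq> 0"
    and Qg: "\<forall>a\<in>Poly_Mapping.keys g. Q a" and Qf: "\<forall>a\<in>Poly_Mapping.keys f. Q a"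
  shows "\<forall>a\<in>Poly_Mapping.keys h. Q a"
proof -
  define h0 where "h0 = restr Q h"
  define h1 where "h1 = restr (\<lambda>a. \<not> Q a) h"
  have hsplit: "h = h0 + h1"
    by (rule poly_mapping_eqI) (simp add: h0_def h1_def lookup_restr lookup_add)
  have k0: "\<forall>e\<in>Poly_Mapping.keys (h0 * g). Q e"
    using keys_mult[of h0 g] Qg Q1 by (fastforce simp: h0_def keys_restr)
  have k1: "\<forall>e\<in>Poly_Mapping.keys (h1 * g). \<not> Q e"
    using keys_mult[of h1 g] Qg Q2 by (fastforce simp: h1_def keys_restr)
  have "h1 * g = 0"
  proof (rule ccontr)
    assume "h1 * g \<noteq> 0"
    then obtain e where e: "e \<in> Poly_Mapping.keys (h1 * g)"
      by (metis keys_eq_empty equals0I)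
    then have nQ: "\<not> Q e" using k1 by blast
    have "Poly_Mapping.lookup f e = Poly_Mapping.lookup (h0 * g) e + Poly_Mapping.lookup (h1 * g) e"
      using hg hsplit by (metis distrib_right lookup_add)
    moreover have "Poly_Mapping.lookup f e = 0" using Qf nQ by (auto simp: in_keys_iff)
    moreover have "Poly_Mapping.lookup (h0 * g) e = 0" using k0 nQ by (auto simp: in_keys_iff)
    ultimately have "Poly_Mapping.lookup (h1 * g) e = 0" by simp
    with e show False by (simp add: in_keys_iff)
  qed
  then have "h1 = 0" using g0 by simp
  then have "h = h0" using hsplit by simp
  then have "Poly_Mapping.keys h = Poly_Mapping.keys h0" by simp
  then show ?thesis unfolding h0_def keys_restr by blast
qed



definition wle :: "('a \<Rightarrow> int) \<Rightarrow> int \<Rightarrow> ('a \<Rightarrow>\<^sub>0 'b::zero) \<Rightarrow> bool" where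
  "wle w K p \<longleftrightarrow> (\<forall>a\<in>Poly_Mapping.keys p. w a \<le> K)"
definition wlt :: "('a \<Rightarrow> int) \<Rightarrow> int \<Rightarrow> ('a \<Rightarrow>\<^sub>0 'b::zero) \<Rightarrow> bool" where
  "wlt w K p \<longleftrightarrow> (\<forall>a\<in>Poly_Mapping.keys p. w a < K)"
definition weq :: "('a \<Rightarrow> int) \<Rightarrow> int \<Rightarrow> ('a \<Rightarrow>\<^sub>0 'b::zero) \<Rightarrow> bool" where
  "weq w K p \<longleftrightarrow> (\<forall>a\<in>Poly_Mapping.keys p. w a = K)"

context
  fixes w :: "'a::{ordered_cancel_comm_monoid_add,linorder} \<Rightarrow> int"
  assumes wadd: "\<And>a b. w (a + b) = w a + w b"
begin

lemma wle_mult: "wle w K1 (x::'a \<Rightarrow>\<^sub>0 'b::idom) \<Longrightarrow> wle w K2 y \<Longrightarrow> wle w (K1+K2) (x*y)"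
  using keys_mult[of x y] by (fastforce simp: wle_def wadd add_mono)
lemma wlt_mult: "wlt w K1 (x::'a \<Rightarrow>\<^sub>0 'b::idom) \<Longrightarrow> wle w K2 y \<Longrightarrow> wlt w (K1+K2) (x*y)"
  using keys_mult[of x y] by (fastforce simp: wle_def wlt_def wadd add_less_le_mono)
lemma wlt_mult2: "wle w K1 (x::'a \<Rightarrow>\<^sub>0 'b::idom) \<Longrightarrow> wlt w K2 y \<Longrightarrow> wlt w (K1+K2) (x*y)"
  using keys_mult[of x y] by (fastforce simp: wle_def wlt_def wadd add_le_less_mono)
lemma weq_mult: "weq w K1 (x::'a \<Rightarrow>\<^sub>0 'b::idom) \<Longrightarrow> weq w K2 y \<Longrightarrow> weq w (K1+K2) (x*y)"
  using keys_mult[of x y] by (fastforce simp: weq_def wadd)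
lemma w0: "w 0 = 0" using wadd[of 0 0] by simp
lemma weq_power: "weq w K (x::'a \<Rightarrow>\<^sub>0 'b::idom) \<Longrightarrow> weq w (int k * K) (x^k)"
proof (induction k)
  case 0 then show ?case by (simp add: weq_def w0)
next
  case (Suc k) then show ?case using weq_mult[of K x "int k * K" "x^k"] by (simp add: algebra_simps)
qed
lemma wle_power: "wle w K (x::'a \<Rightarrow>\<^sub>0 'b::idom) \<Longrightarrow> wle w (int k * K) (x^k)"
proof (induction k)
  case 0 then show ?case by (simp add: wle_def w0)
next
  case (Suc k) then show ?case using wle_mult[of K x "int k * K" "x^k"] by (simp add: algebra_simps)
qed
end

lemma wlt_add: "wlt w K x \<Longrightarrow> wlt w K y \<Longrightarrow> wlt w K (x + y)"
  using keys_add[of x y] by (auto simp: wlt_def)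
lemma wlt_sum: "(\<And>i. i \<in> A \<Longrightarrow> wlt w K (f i)) \<Longrightarrow> wlt w K (sum f A)"
  by (induction A rule: infinite_finite_induct) (auto simp: wlt_add, auto simp: wlt_def)
lemma wle_wlt: "wle w K1 x \<Longrightarrow> K1 < K2 \<Longrightarrow> wlt w K2 x"
  by (auto simp: wle_def wlt_def)
lemma weq_wle: "weq w K x \<Longrightarrow> wle w K x"
  by (auto simp: wle_def weq_def)

lemma weight_bound:
  fixes h :: "'a::{ordered_cancel_comm_monoid_add,linorder} \<Rightarrow>\<^sub>0 'b::idom"
  assumes wadd: "\<And>a b. w (a + b) = w a + w b"
    and c: "\<And>i. i < N \<Longrightarrow> wle w 0 (c i)"
    and E: "h^N + (\<Sum>i<N. c i * h^i) = 0"
  shows "wle w 0 h"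
proof (rule ccontr)
  assume "\<not> wle w 0 h"
  then obtain a0 where a0: "a0 \<in> Poly_Mapping.keys h" "w a0 > 0" by (auto simp: wle_def)
  define t where "t = Max (w ` Poly_Mapping.keys h)"
  have fin: "finite (w ` Poly_Mapping.keys h)" by simp
  have tge: "\<And>a. a \<in> Poly_Mapping.keys h \<Longrightarrow> w a \<le> t" using fin t_def by simp
  have t0: "t > 0" using tge[OF a0(1)] a0(2) by simp
  have "t \<in> w ` Poly_Mapping.keys h" unfolding t_def by (rule Max_in[OF fin]) (use a0 in auto)
  then obtain a1 where a1: "a1 \<in> Poly_Mapping.keys h" "w a1 = t" by auto
  define H where "H = restr (\<lambda>a. w a = t) h"
  define h' where "h' = restr (\<lambda>a. w a \<noteq> t) h"
  have hs: "h = H + h'"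
    by (rule poly_mapping_eqI) (simp add: H_def h'_def lookup_restr lookup_add)
  have weqH: "weq w t H" by (simp add: weq_def H_def keys_restr)
  have wlth': "wlt w t h'" using tge by (fastforce simp: wlt_def h'_def keys_restr)
  have wleh: "wle w t h" using tge by (simp add: wle_def)
  have "a1 \<in> Poly_Mapping.keys H" using a1 by (simp add: H_def keys_restr)
  then have H0: "H \<noteq> 0" by auto
  have pw: "\<exists>R. h^k = H^k + R \<and> wlt w (int k * t) R" for k
  proof (induction k)
    case 0 then show ?case by (intro exI[of _ 0]) (simp add: wlt_def)
  next
    case (Suc k)
    then obtain R where R: "h^k = H^k + R" "wlt w (int k * t) R" by blast
    have "h^Suc k = h^k * h" by (simp add: mult.commute)
    also have "\<dots> = (H^k + R) * (H + h')" using R(1) hs by simp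
    also have "\<dots> = H^Suc k + (H^k * h' + R * H + R * h')" by (simp add: algebra_simps)
    finally have "h^Suc k = H^Suc k + (H^k * h' + R * H + R * h')" .
    moreover have "wlt w (int (Suc k) * t) (H^k * h' + R * H + R * h')"
    proof -
      have e: "int (Suc k) * t = int k * t + t" by (simp add: algebra_simps)
      have 1: "wlt w (int k * t + t) (H^k * h')"
        by (rule wlt_mult2[OF wadd weq_wle[OF weq_power[OF wadd weqH]] wlth'])
      have 2: "wlt w (int k * t + t) (R * H)"
        by (rule wlt_mult[OF wadd R(2) weq_wle[OF weqH]])
      have 3: "wlt w (int k * t + t) (R * h')"
        by (rule wlt_mult[OF wadd R(2)]) (use wlth' in \<open>auto simp: wle_def wlt_def\<close>)
      show ?thesis unfolding e by (intro wlt_add 1 2 3)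
    qed
    ultimately show ?case by blast
  qed
  obtain R where R: "h^N = H^N + R" "wlt w (int N * t) R" using pw by blast
  have "H^N \<noteq> 0" using H0 by simp
  then obtain e where e: "e \<in> Poly_Mapping.keys (H^N)" by (metis keys_eq_empty equals0I)
  have we: "w e = int N * t" using weq_power[OF wadd weqH, of N] e by (simp add: weq_def)
  then have "e \<notin> Poly_Mapping.keys R" using R(2) by (auto simp: wlt_def)
  then have ehN: "e \<in> Poly_Mapping.keys (h^N)" using e R(1) by (simp add: in_keys_iff lookup_add)
  have "wlt w (int N * t) (\<Sum>i<N. c i * h^i)"
  proof (rule wlt_sum)
    fix i assume "i \<in> {..<N}"
    then have i: "i < N" by simp
    have "wle w (0 + int i * t) (c i * h^i)"
      by (rule wle_mult[OF wadd c[OF i] wle_power[OF wadd wleh]])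
    moreover have "0 + int i * t < int N * t" using i t0 by simp
    ultimately show "wlt w (int N * t) (c i * h^i)" by (rule wle_wlt)
  qed
  moreover have "h^N = - (\<Sum>i<N. c i * h^i)" using E by (simp add: eq_neg_iff_add_eq_0)
  ultimately have "wlt w (int N * t) (h^N)" by (simp add: wlt_def)
  with ehN we show False by (auto simp: wlt_def)
qed


lemma sg_add: "a \<in> semigroup_gen G \<Longrightarrow> b \<in> semigroup_gen G \<Longrightarrow> a + b \<in> semigroup_gen G"
  by (induction a rule: semigroup_gen.induct) (auto simp: add.assoc intro: semigroup_gen.add)

lemma sg_gen: "a \<in> G \<Longrightarrow> a \<in> semigroup_gen G"
  using semigroup_gen.add[OF _ semigroup_gen.zero] by fastforce

lemma sg_mono: assumes "G \<subseteq> G'" "a \<in> semigroup_gen G" shows "a \<in> semigroup_gen G'"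
  using assms(2) by (induction a rule: semigroup_gen.induct) (use assms(1) in \<open>auto intro: semigroup_gen.intros\<close>)

lemma sg_induct_prop:
  assumes "a \<in> semigroup_gen G" "P 0" "\<And>x y. P x \<Longrightarrow> P y \<Longrightarrow> P (x + y)" "\<And>x. x \<in> G \<Longrightarrow> P x"
  shows "P a"
  using assms(1) by (induction a rule: semigroup_gen.induct) (auto intro: assms)

lemma total_deg_add: "total_deg n (a + b) = total_deg n a + total_deg n b"
  by (simp add: total_deg_def lookup_add sum.distrib)

lemma total_deg_zero: "total_deg n 0 = 0" by (simp add: total_deg_def)

lemma keys_add_nat': "Poly_Mapping.keys (a + b :: nat \<Rightarrow>\<^sub>0 nat) = Poly_Mapping.keys a \<union> Poly_Mapping.keys b"
  by (auto simp: in_keys_iff lookup_add)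

lemma sg_T: "a \<in> semigroup_gen (T_exps n d) \<Longrightarrow> Poly_Mapping.keys a \<subseteq> {..<n} \<and> d dvd total_deg n a"
  by (erule sg_induct_prop) (auto simp: total_deg_zero total_deg_add keys_add_nat' T_exps_def)

lemma take_units:
  fixes a :: "nat \<Rightarrow>\<^sub>0 nat"
  assumes "finite I"
  shows "r \<le> (\<Sum>l\<in>I. Poly_Mapping.lookup a l) \<Longrightarrow>
    \<exists>u. (\<forall>l. Poly_Mapping.lookup u l \<le> Poly_Mapping.lookup a l) \<and> Poly_Mapping.keys u \<subseteq> I \<and> (\<Sum>l\<in>I. Poly_Mapping.lookup u l) = r"
  using assms
proof (induction I arbitrary: r rule: finite_induct)
  case empty then show ?case by (intro exI[of _ 0]) simp
next
  case (insert l I)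
  define x where "x = min (Poly_Mapping.lookup a l) r"
  have "r - x \<le> (\<Sum>l\<in>I. Poly_Mapping.lookup a l)" using insert x_def by auto
  then obtain u' where u': "\<forall>l. Poly_Mapping.lookup u' l \<le> Poly_Mapping.lookup a l"
     "Poly_Mapping.keys u' \<subseteq> I" "(\<Sum>l\<in>I. Poly_Mapping.lookup u' l) = r - x" using insert.IH by blast
  define u where "u = u' + Poly_Mapping.single l x"
  have ul: "Poly_Mapping.lookup u' l = 0" using u'(2) insert.hyps(2) by (auto simp: in_keys_iff)
  have "\<forall>l'. Poly_Mapping.lookup u l' \<le> Poly_Mapping.lookup a l'"
    using u'(1) ul by (auto simp: u_def lookup_add lookup_single when_def x_def)
  moreover have "Poly_Mapping.keys u \<subseteq> insert l I"
    using u'(2) by (auto simp: u_def keys_add_nat')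
  moreover have "(\<Sum>l'\<in>insert l I. Poly_Mapping.lookup u l') = r"
  proof -
    have "(\<Sum>l'\<in>I. Poly_Mapping.lookup u l') = (\<Sum>l'\<in>I. Poly_Mapping.lookup u' l')"
      using insert.hyps(2) by (intro sum.cong) (auto simp: u_def lookup_add lookup_single when_def)
    then show ?thesis using insert.hyps u' ul x_def insert.prems
      by (simp add: u_def lookup_add)
  qed
  ultimately show ?case by blast
qed

lemma total_deg_split: "i < n \<Longrightarrow> total_deg n a = Poly_Mapping.lookup a i + (\<Sum>l\<in>{..<n}-{i}. Poly_Mapping.lookup a l)"
  by (simp add: total_deg_def sum.remove[of "{..<n}" i])

lemma decomp:
  assumes i: "i < n" and d: "d \<ge> 1"
  shows "Poly_Mapping.keys a \<subseteq> {..<n} \<Longrightarrow> total_deg n a = j * d \<Longrightarrow> Poly_Mapping.lookup a i \<le> j * (d - 1)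
    \<Longrightarrow> a \<in> semigroup_gen (T_exps n d - {Poly_Mapping.single i d})"
proof (induction j arbitrary: a)
  case 0
  then have "\<forall>l<n. Poly_Mapping.lookup a l = 0" by (simp add: total_deg_def)
  then have "a = 0" using 0(1) by (intro poly_mapping_eqI) (auto simp: in_keys_iff)
  then show ?case by (simp add: semigroup_gen.zero)
next
  case (Suc j)
  define I where "I = {..<n} - {i}"
  define s where "s = (\<Sum>l\<in>I. Poly_Mapping.lookup a l)"
  have tda: "Poly_Mapping.lookup a i + s = Suc j * d" using total_deg_split[OF i, of a] Suc.prems s_def I_def by simp
  define x where "x = min (Poly_Mapping.lookup a i) (d - 1)"
  define r where "r = d - x"
  have rs: "r \<le> s"
  proof (cases "Poly_Mapping.lookup a i \<le> d - 1")
    case True then show ?thesis using tda d by (simp add: r_def x_def)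
  next
    case False
    then have "r = 1" using d by (simp add: r_def x_def)
    moreover have "Suc j * (d - 1) + Suc j \<le> Suc j * d"
    proof -
      obtain e where "d = Suc e" using d by (cases d) auto
      then show ?thesis by simp
    qed
    ultimately show ?thesis using tda Suc.prems(3) by linarith
  qed
  obtain u where u: "\<forall>l. Poly_Mapping.lookup u l \<le> Poly_Mapping.lookup a l" "Poly_Mapping.keys u \<subseteq> I"
     "(\<Sum>l\<in>I. Poly_Mapping.lookup u l) = r"
    using take_units[of I r a] rs s_def I_def by auto
  define t where "t = u + Poly_Mapping.single i x"
  define a' where "a' = a - t"
  have ui: "Poly_Mapping.lookup u i = 0" using u(2) by (auto simp: I_def in_keys_iff)
  have tle: "\<forall>l. Poly_Mapping.lookup t l \<le> Poly_Mapping.lookup a l"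
    using u(1) ui by (auto simp: t_def lookup_add lookup_single when_def x_def)
  have aeq: "a = t + a'"
    using tle by (intro poly_mapping_eqI) (simp add: a'_def lookup_add lookup_minus)
  have tkeys: "Poly_Mapping.keys t \<subseteq> {..<n}" using u(2) i by (auto simp: t_def keys_add_nat' I_def)
  have tdt: "total_deg n t = d"
  proof -
    have "(\<Sum>l\<in>I. Poly_Mapping.lookup t l) = r"
      using u(3) by (subst u(3)[symmetric]) (intro sum.cong, auto simp: t_def lookup_add lookup_single when_def I_def)
    then show ?thesis using total_deg_split[OF i, of t] ui d by (simp add: t_def lookup_add I_def r_def x_def)
  qed
  have ti: "Poly_Mapping.lookup t i = x" using ui by (simp add: t_def lookup_add)
  have tT: "t \<in> T_exps n d - {Poly_Mapping.single i d}"
  proof -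
    have "t \<noteq> Poly_Mapping.single i d" using ti d by (auto simp: x_def)
    then show ?thesis using tkeys tdt by (simp add: T_exps_def)
  qed
  have a'keys: "Poly_Mapping.keys a' \<subseteq> {..<n}"
  proof
    fix x assume "x \<in> Poly_Mapping.keys a'"
    then have "Poly_Mapping.lookup a x \<noteq> 0" by (auto simp: a'_def in_keys_iff lookup_minus)
    then have "x \<in> Poly_Mapping.keys a" by (simp add: in_keys_iff)
    then show "x \<in> {..<n}" using Suc.prems(1) by blast
  qed
  have a'deg: "total_deg n a' = j * d"
    using aeq Suc.prems(2) tdt total_deg_add[of n t a'] by simp
  have a'i: "Poly_Mapping.lookup a' i \<le> j * (d - 1)"
  proof -
    have "Poly_Mapping.lookup a' i = Poly_Mapping.lookup a i - x" using ti by (simp add: a'_def lookup_minus)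
    moreover have "Suc j * (d - 1) = j * (d - 1) + (d - 1)" by simp
    ultimately show ?thesis using Suc.prems(3) by (auto simp: x_def)
  qed
  have "a' \<in> semigroup_gen (T_exps n d - {Poly_Mapping.single i d})"
    using Suc.IH a'keys a'deg a'i by blast
  then show ?case using aeq tT by (simp add: semigroup_gen.add)
qed



lemma two_coords_le: "n \<ge> 2 \<Longrightarrow> Poly_Mapping.lookup a 0 + Poly_Mapping.lookup a 1 \<le> total_deg n a"
proof -
  assume n: "n \<ge> 2"
  have "Poly_Mapping.lookup a 1 \<le> (\<Sum>l\<in>{..<n}-{0}. Poly_Mapping.lookup a l)"
    using n by (intro member_le_sum) auto
  then show ?thesis using total_deg_split[of 0 n a] n by simp
qed

lemma A_char:
  assumes n: "n \<ge> 2" and d: "d \<ge> 2" and k: "Poly_Mapping.keys a \<subseteq> {..<n}" and dv: "d dvd total_deg n a"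
  shows "a \<in> semigroup_gen (T_exps n d)"
proof -
  obtain j where j: "total_deg n a = j * d" using dv by (metis dvdE mult.commute)
  have "\<exists>i<n. Poly_Mapping.lookup a i \<le> j * (d - 1)"
  proof (cases "Poly_Mapping.lookup a 0 \<le> j * (d - 1)")
    case True then show ?thesis using n by (intro exI[of _ 0]) auto
  next
    case False
    have "j * 1 \<le> j * (d - 1)" using d by (intro mult_le_mono2) simp
    moreover have "j * (d - 1) + j = j * d" using d by (cases d) (auto simp: algebra_simps)
    ultimately have "Poly_Mapping.lookup a 1 \<le> j * (d - 1)"
      using False two_coords_le[OF n, of a] j by linarith
    then show ?thesis using n by (intro exI[of _ 1]) auto
  qed
  then obtain i where "i < n" "Poly_Mapping.lookup a i \<le> j * (d - 1)" by blast
  then have "a \<in> semigroup_gen (T_exps n d - {Poly_Mapping.single i d})"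
    using decomp[of i n d a j] d k j by simp
  then show ?thesis by (rule sg_mono[rotated]) blast
qed

lemma max_exp_ge: "l < n \<Longrightarrow> Poly_Mapping.lookup m l \<le> max_exp n m"
  by (auto simp: max_exp_def)

lemma max_exp_in: "n \<ge> 1 \<Longrightarrow> \<exists>i<n. Poly_Mapping.lookup m i = max_exp n m"
proof -
  assume "n \<ge> 1"
  then have "max_exp n m \<in> Poly_Mapping.lookup m ` {..<n}"
    unfolding max_exp_def by (intro Max_in) (auto simp: lessThan_empty_iff)
  then show ?thesis by auto
qed

lemma T_lookup_le: "t \<in> T_exps n d \<Longrightarrow> i < n \<Longrightarrow> Poly_Mapping.lookup t i \<le> d"
  using total_deg_split[of i n t] by (auto simp: T_exps_def)

lemma T_eq_single:
  assumes t: "t \<in> T_exps n d" and i: "i < n" and ti: "Poly_Mapping.lookup t i = d"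
  shows "t = Poly_Mapping.single i d"
proof -
  have "(\<Sum>l\<in>{..<n}-{i}. Poly_Mapping.lookup t l) = 0"
    using total_deg_split[OF i, of t] t ti by (auto simp: T_exps_def)
  then have "\<forall>l\<in>{..<n}-{i}. Poly_Mapping.lookup t l = 0" by simp
  then show ?thesis using t ti i
    by (intro poly_mapping_eqI) (auto simp: lookup_single when_def T_exps_def in_keys_iff)
qed

lemma two_support:
  assumes m: "m \<in> T_exps n d" and mx: "max_exp n m < d" and n: "n \<ge> 2" and d: "d \<ge> 2"
  shows "\<exists>i j. i < n \<and> j < n \<and> i \<noteq> j \<and> Poly_Mapping.lookup m i > 0 \<and> Poly_Mapping.lookup m j > 0"
proof -
  have "\<exists>i<n. Poly_Mapping.lookup m i > 0"
  proof (rule ccontr)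
    assume "\<not> (\<exists>i<n. Poly_Mapping.lookup m i > 0)"
    then have "total_deg n m = 0" by (simp add: total_deg_def)
    then show False using m d by (simp add: T_exps_def)
  qed
  then obtain i where i: "i < n" "Poly_Mapping.lookup m i > 0" by blast
  have mi: "Poly_Mapping.lookup m i < d" using max_exp_ge[OF i(1), of m] mx by simp
  have tm: "total_deg n m = d" using m by (simp add: T_exps_def)
  have "Poly_Mapping.lookup m i + (\<Sum>l\<in>{..<n}-{i}. Poly_Mapping.lookup m l) = d"
    using total_deg_split[OF i(1), of m] tm by simp
  then have pos: "(\<Sum>l\<in>{..<n}-{i}. Poly_Mapping.lookup m l) \<noteq> 0" using mi by linarith
  have "\<exists>j\<in>{..<n}-{i}. Poly_Mapping.lookup m j \<noteq> 0"
  proof (rule ccontr)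
    assume "\<not> (\<exists>j\<in>{..<n}-{i}. Poly_Mapping.lookup m j \<noteq> 0)"
    then have "(\<Sum>l\<in>{..<n}-{i}. Poly_Mapping.lookup m l) = 0" by (intro sum.neutral) blast
    with pos show False by contradiction
  qed
  then obtain j where "j \<in> {..<n}-{i}" "Poly_Mapping.lookup m j > 0" by blast
  then show ?thesis using i by blast
qed

lemma total_deg_single: "total_deg n (Poly_Mapping.single j c) = (if j < n then c else 0)"
  by (simp add: total_deg_def lookup_single when_def)

definition mv :: "(nat \<Rightarrow>\<^sub>0 nat) \<Rightarrow> nat \<Rightarrow> nat \<Rightarrow> (nat \<Rightarrow>\<^sub>0 nat)" where
  "mv b j i = (b - Poly_Mapping.single j 1) + Poly_Mapping.single i 1"

lemma lookup_mv: "Poly_Mapping.lookup b j \<ge> 1 \<Longrightarrow> Poly_Mapping.lookup (mv b j i) x =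
   Poly_Mapping.lookup b x - (if x = j then 1 else 0) + (if x = i then 1 else 0)"
  by (simp add: mv_def lookup_add lookup_minus lookup_single when_def)

lemma mv_T:
  assumes b: "b \<in> T_exps n d" and j: "Poly_Mapping.lookup b j \<ge> 1" and i: "i < n"
  shows "mv b j i \<in> T_exps n d"
proof -
  have "j \<in> Poly_Mapping.keys b" using j by (simp add: in_keys_iff)
  then have jn: "j < n" using b by (auto simp: T_exps_def)
  have b': "b = (b - Poly_Mapping.single j 1) + Poly_Mapping.single j 1"
    using j by (intro poly_mapping_eqI) (auto simp: lookup_add lookup_minus lookup_single when_def)
  have td1: "total_deg n b = total_deg n (b - Poly_Mapping.single j 1) + 1"
  proof -
    have "total_deg n b = total_deg n ((b - Poly_Mapping.single j 1) + Poly_Mapping.single j 1)"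
      by (subst b'[symmetric]) (rule refl)
    also have "\<dots> = total_deg n (b - Poly_Mapping.single j 1) + 1"
      using jn by (simp only: total_deg_add total_deg_single if_True)
    finally show ?thesis .
  qed
  have td2: "total_deg n (mv b j i) = total_deg n (b - Poly_Mapping.single j 1) + 1"
    using i by (simp add: mv_def total_deg_add total_deg_single)
  have k1: "Poly_Mapping.keys (b - Poly_Mapping.single j 1) \<subseteq> Poly_Mapping.keys b"
    by (auto simp: in_keys_iff lookup_minus)
  have k2: "Poly_Mapping.keys (mv b j i) \<subseteq> Poly_Mapping.keys (b - Poly_Mapping.single j 1) \<union> {i}"
    by (simp add: mv_def keys_add_nat')
  have "Poly_Mapping.keys (mv b j i) \<subseteq> {..<n}"
    using b i k1 k2 unfolding T_exps_def by blast
  moreover have "total_deg n b = d" using b by (simp add: T_exps_def)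
  then have "total_deg n (mv b j i) = d" using td1 td2 by linarith
  ultimately show ?thesis by (simp add: T_exps_def)
qed


lemma mm_AP:
  assumes m: "m \<in> T_exps n d" and ij: "i < n" "j < n" "i \<noteq> j" and mi: "Poly_Mapping.lookup m i > 0" and mj: "Poly_Mapping.lookup m j > 0"
  shows "m + m \<in> semigroup_gen (T_exps n d - {m})"
proof -
  have t1: "mv m j i \<in> T_exps n d - {m}"
  proof -
    have "Poly_Mapping.lookup (mv m j i) i \<noteq> Poly_Mapping.lookup m i" using mj ij by (simp add: lookup_mv)
    then show ?thesis using mv_T[OF m _ ij(1)] mj by auto
  qed
  have t2: "mv m i j \<in> T_exps n d - {m}"
  proof -
    have "Poly_Mapping.lookup (mv m i j) j \<noteq> Poly_Mapping.lookup m j" using mi ij by (simp add: lookup_mv)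
    then show ?thesis using mv_T[OF m _ ij(2)] mi by auto
  qed
  have "mv m j i + mv m i j = m + m"
    using mi mj by (intro poly_mapping_eqI) (auto simp: lookup_add lookup_mv)
  moreover have "mv m j i + mv m i j \<in> semigroup_gen (T_exps n d - {m})"
    using t1 t2 by (intro sg_add sg_gen)
  ultimately show ?thesis by simp
qed

lemma A_split:
  assumes a: "a \<in> semigroup_gen (T_exps n d)" and mm: "m + m \<in> semigroup_gen (T_exps n d - {m})"
  shows "a \<in> semigroup_gen (T_exps n d - {m}) \<or> (\<exists>b\<in>semigroup_gen (T_exps n d - {m}). a = m + b)"
  using a
proof (induction a rule: semigroup_gen.induct)
  case zero then show ?case by (simp add: semigroup_gen.zero)
next
  case (add t b)
  show ?case
  proof (cases "t = m")
    case False
    then have tG: "t \<in> T_exps n d - {m}" using add by simp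
    from add.IH show ?thesis
    proof
      assume "b \<in> semigroup_gen (T_exps n d - {m})"
      then show ?thesis using tG by (simp add: semigroup_gen.add)
    next
      assume "\<exists>b'\<in>semigroup_gen (T_exps n d - {m}). b = m + b'"
      then obtain b' where "b' \<in> semigroup_gen (T_exps n d - {m})" "b = m + b'" by blast
      moreover have "t + b' \<in> semigroup_gen (T_exps n d - {m})"
        using tG \<open>b' \<in> _\<close> by (simp add: semigroup_gen.add)
      ultimately show ?thesis by (intro disjI2 bexI[of _ "t + b'"]) (simp_all add: add.left_commute)
    qed
  next
    case True
    from add.IH show ?thesis
    proof
      assume "b \<in> semigroup_gen (T_exps n d - {m})"
      then show ?thesis using True by blast
    next
      assume "\<exists>b'\<in>semigroup_gen (T_exps n d - {m}). b = m + b'"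
      then obtain b' where "b' \<in> semigroup_gen (T_exps n d - {m})" "b = m + b'" by blast
      then show ?thesis using True mm by (intro disjI1) (metis add.assoc sg_add)
    qed
  qed
qed

lemma shift_AP:
  assumes m: "m \<in> T_exps n d" and mx: "max_exp n m < d" and d: "d \<ge> 2"
    and kl: "k < n" "l < n" "k \<noteq> l" and ml: "Poly_Mapping.lookup m l > 0"
    and ne: "mv (Poly_Mapping.single k d) k l \<noteq> m"
  shows "Poly_Mapping.single k d \<in> semigroup_gen (T_exps n d - {m}) \<and>
         m + Poly_Mapping.single k d \<in> semigroup_gen (T_exps n d - {m})"
proof -
  have sT: "Poly_Mapping.single k d \<in> T_exps n d"
    using kl by (simp add: T_exps_def total_deg_single)
  have "Poly_Mapping.single k d \<noteq> m"
    using max_exp_ge[OF kl(1), of m] mx by auto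
  then have s: "Poly_Mapping.single k d \<in> T_exps n d - {m}" using sT by simp
  have t1: "mv m l k \<in> T_exps n d - {m}"
  proof -
    have "Poly_Mapping.lookup (mv m l k) k \<noteq> Poly_Mapping.lookup m k" using ml kl by (simp add: lookup_mv)
    then show ?thesis using mv_T[OF m _ kl(1)] ml by auto
  qed
  have t2: "mv (Poly_Mapping.single k d) k l \<in> T_exps n d - {m}"
    using mv_T[OF sT _ kl(2)] d ne by simp
  have "mv m l k + mv (Poly_Mapping.single k d) k l = m + Poly_Mapping.single k d"
    using ml d kl by (intro poly_mapping_eqI) (auto simp: lookup_add lookup_mv lookup_single when_def)
  moreover have "mv m l k + mv (Poly_Mapping.single k d) k l \<in> semigroup_gen (T_exps n d - {m})"
    using t1 t2 by (intro sg_add sg_gen)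
  ultimately show ?thesis using s sg_gen by metis
qed


lemma lookup_mv_single: "d \<ge> 1 \<Longrightarrow> Poly_Mapping.lookup (mv (Poly_Mapping.single k d) k l) x =
   (if x = k then d - 1 else 0) + (if x = l then 1 else 0)"
  by (simp add: lookup_mv lookup_single when_def)

lemma exists_shift:
  assumes m: "m \<in> T_exps n d" and mx: "max_exp n m < d" and n: "n \<ge> 2" and d: "d \<ge> 2"
    and ns: "\<not> (n = 2 \<and> d = 2 \<and> m = Poly_Mapping.single 0 1 + Poly_Mapping.single 1 1)"
  shows "\<exists>k<n. Poly_Mapping.single k d \<in> semigroup_gen (T_exps n d - {m}) \<and>
         m + Poly_Mapping.single k d \<in> semigroup_gen (T_exps n d - {m})"
proof -
  obtain i j where ij: "i < n" "j < n" "i \<noteq> j" "Poly_Mapping.lookup m i > 0" "Poly_Mapping.lookup m j > 0"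
    using two_support[OF m mx n d] by blast
  show ?thesis
  proof (cases "mv (Poly_Mapping.single i d) i j \<noteq> m")
    case True
    then show ?thesis using shift_AP[OF m mx d ij(1,2,3,5)] ij(1) by blast
  next
    case F1: False
    show ?thesis
    proof (cases "mv (Poly_Mapping.single j d) j i \<noteq> m")
      case True
      then show ?thesis using shift_AP[OF m mx d ij(2,1) _ ij(4)] ij by metis
    next
      case F2: False
      have e1: "mv (Poly_Mapping.single i d) i j = m" using F1 by simp
      have e2: "mv (Poly_Mapping.single j d) j i = m" using F2 by simp
      have d1: "d \<ge> 1" using d by simp
      have "Poly_Mapping.lookup m i = d - 1"
        using lookup_mv_single[OF d1, of i j i] ij(3) e1 by simp
      moreover have "Poly_Mapping.lookup m i = 1"
        using lookup_mv_single[OF d1, of j i i] ij(3) e2 by simp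
      ultimately have d2: "d = 2" using d by simp
      have mform: "m = Poly_Mapping.single i 1 + Poly_Mapping.single j 1"
      proof (rule poly_mapping_eqI)
        fix x
        have "Poly_Mapping.lookup m x = (if x = i then 1 else 0) + (if x = j then 1 else 0)"
          using lookup_mv_single[OF d1, of i j x] e1 d2 by simp
        then show "Poly_Mapping.lookup m x = Poly_Mapping.lookup (Poly_Mapping.single i 1 + Poly_Mapping.single j 1) x"
          by (simp add: lookup_add lookup_single when_def)
      qed
      show ?thesis
      proof (cases "n = 2")
        case True
        then have "(i = 0 \<and> j = 1) \<or> (i = 1 \<and> j = 0)" using ij by auto
        then have "m = Poly_Mapping.single 0 1 + Poly_Mapping.single 1 1"
          using mform by (auto simp: add.commute)
        then show ?thesis using ns True d2 by blast
      next
        case False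
        then have n3: "n \<ge> 3" using n by simp
        obtain k where k: "k < n" "k \<noteq> i" "k \<noteq> j"
        proof -
          have "card {i, j} < card {..<n}" using n3 by (simp add: card_insert_if)
          then have "\<not> {..<n} \<subseteq> {i, j}" using card_mono[of "{i,j}" "{..<n}"] by fastforce
          then obtain k where "k \<in> {..<n}" "k \<notin> {i, j}" by blast
          then show ?thesis using that by auto
        qed
        have "Poly_Mapping.lookup (mv (Poly_Mapping.single k d) k i) j = 0"
          using k ij d by (simp add: lookup_mv_single)
        then have "mv (Poly_Mapping.single k d) k i \<noteq> m" using ij(5) by auto
        then show ?thesis using shift_AP[OF m mx d k(1) ij(1) k(2) ij(4)] k(1) by blast
      qed
    qed
  qed
qed

lemma max_eq_single:
  assumes m: "m \<in> T_exps n d" and mx: "max_exp n m = d" and n: "n \<ge> 2"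
  shows "\<exists>i<n. m = Poly_Mapping.single i d"
proof -
  obtain i where "i < n" "Poly_Mapping.lookup m i = max_exp n m" using max_exp_in[of n m] n by auto
  then show ?thesis using T_eq_single[OF m] mx by auto
qed

lemma AP_weight:
  assumes a: "a \<in> semigroup_gen (T_exps n d - {Poly_Mapping.single i d})" and i: "i < n"
  shows "d * Poly_Mapping.lookup a i \<le> (d - 1) * total_deg n a"
  using a
proof (rule sg_induct_prop)
  show "d * Poly_Mapping.lookup 0 i \<le> (d - 1) * total_deg n 0" by simp
next
  fix x y assume "d * Poly_Mapping.lookup x i \<le> (d - 1) * total_deg n x" "d * Poly_Mapping.lookup y i \<le> (d - 1) * total_deg n y"
  then show "d * Poly_Mapping.lookup (x + y) i \<le> (d - 1) * total_deg n (x + y)"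
    by (simp add: lookup_add total_deg_add algebra_simps)
next
  fix t assume t: "t \<in> T_exps n d - {Poly_Mapping.single i d}"
  then have "Poly_Mapping.lookup t i \<le> d" using T_lookup_le i by auto
  moreover have "Poly_Mapping.lookup t i \<noteq> d" using t T_eq_single i by auto
  ultimately have "Poly_Mapping.lookup t i \<le> d - 1" by simp
  then have "d * Poly_Mapping.lookup t i \<le> d * (d - 1)" by simp
  then show "d * Poly_Mapping.lookup t i \<le> (d - 1) * total_deg n t" using t by (simp add: T_exps_def mult.commute)
qed

lemma AP_weight_conv:
  assumes i: "i < n" and d: "d \<ge> 1" and k: "Poly_Mapping.keys a \<subseteq> {..<n}" and dv: "d dvd total_deg n a"
    and w: "d * Poly_Mapping.lookup a i \<le> (d - 1) * total_deg n a"
  shows "a \<in> semigroup_gen (T_exps n d - {Poly_Mapping.single i d})"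
proof -
  obtain j where j: "total_deg n a = j * d" using dv by (metis dvdE mult.commute)
  have "d * Poly_Mapping.lookup a i \<le> d * (j * (d - 1))" using w j by (simp add: algebra_simps)
  then have "Poly_Mapping.lookup a i \<le> j * (d - 1)" using d by simp
  then show ?thesis using decomp[OF i d k j] by simp
qed

definition Q2 :: "(nat \<Rightarrow>\<^sub>0 nat) \<Rightarrow> bool" where
  "Q2 a \<longleftrightarrow> Poly_Mapping.keys a \<subseteq> {..<2} \<and> even (Poly_Mapping.lookup a 0) \<and> even (Poly_Mapping.lookup a 1)"

lemma special_AP_Q2:
  assumes a: "a \<in> semigroup_gen (T_exps 2 2 - {Poly_Mapping.single 0 1 + Poly_Mapping.single 1 1})"
  shows "Q2 a"
  using a
proof (rule sg_induct_prop)
  show "Q2 0" by (simp add: Q2_def)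
next
  fix x y assume "Q2 x" "Q2 y" then show "Q2 (x + y)" by (auto simp: Q2_def keys_add_nat' lookup_add)
next
  fix t assume t: "t \<in> T_exps 2 2 - {Poly_Mapping.single 0 1 + Poly_Mapping.single 1 1}"
  then have k: "Poly_Mapping.keys t \<subseteq> {..<2}" and s: "Poly_Mapping.lookup t 0 + Poly_Mapping.lookup t 1 = 2"
    by (auto simp: T_exps_def total_deg_def numeral_2_eq_2)
  have "Poly_Mapping.lookup t 0 \<noteq> 1"
  proof
    assume t0: "Poly_Mapping.lookup t 0 = 1"
    then have t1: "Poly_Mapping.lookup t 1 = 1" using s by simp
    have "t = Poly_Mapping.single 0 1 + Poly_Mapping.single 1 1"
    proof (rule poly_mapping_eqI)
      fix x show "Poly_Mapping.lookup t x = Poly_Mapping.lookup (Poly_Mapping.single 0 1 + Poly_Mapping.single 1 1) x"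
        using t0 t1 k by (cases "x < 2") (auto simp: lookup_add lookup_single when_def in_keys_iff less_2_cases_iff)
    qed
    with t show False by simp
  qed
  then have "Poly_Mapping.lookup t 0 = 0 \<or> Poly_Mapping.lookup t 0 = 2" using s by linarith
  then show "Q2 t" using s k by (auto simp: Q2_def)
qed

lemma single_even_AP:
  assumes i: "i < 2"
  shows "Poly_Mapping.single i (2 * e) \<in> semigroup_gen (T_exps 2 2 - {Poly_Mapping.single 0 1 + Poly_Mapping.single 1 1})"
proof (induction e)
  case 0 then show ?case by (simp add: semigroup_gen.zero)
next
  case (Suc e)
  have sT: "Poly_Mapping.single i 2 \<in> T_exps 2 2 - {Poly_Mapping.single 0 1 + Poly_Mapping.single 1 1}"
  proof -
    have "Poly_Mapping.lookup (Poly_Mapping.single 0 1 + Poly_Mapping.single 1 1) i = (1::nat)"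
      using i by (auto simp: lookup_add lookup_single when_def less_2_cases_iff)
    moreover have "Poly_Mapping.lookup (Poly_Mapping.single i (2::nat)) i = 2" by simp
    ultimately have "Poly_Mapping.single i (2::nat) \<noteq> Poly_Mapping.single 0 1 + Poly_Mapping.single 1 1"
      by fastforce
    then show ?thesis using i by (simp add: T_exps_def total_deg_single)
  qed
  have "Poly_Mapping.single i (2 * Suc e) = Poly_Mapping.single i 2 + Poly_Mapping.single i (2 * e)"
    by (simp add: single_add[symmetric])
  then show ?case using Suc sT by (simp add: semigroup_gen.add)
qed

lemma Q2_AP:
  assumes "Q2 a"
  shows "a \<in> semigroup_gen (T_exps 2 2 - {Poly_Mapping.single 0 1 + Poly_Mapping.single 1 1})"
proof -
  obtain e0 e1 where e: "Poly_Mapping.lookup a 0 = 2 * e0" "Poly_Mapping.lookup a 1 = 2 * e1"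
    using assms by (auto simp: Q2_def elim!: evenE)
  have "a = Poly_Mapping.single 0 (2 * e0) + Poly_Mapping.single 1 (2 * e1)"
  proof (rule poly_mapping_eqI)
    fix x show "Poly_Mapping.lookup a x = Poly_Mapping.lookup (Poly_Mapping.single 0 (2 * e0) + Poly_Mapping.single 1 (2 * e1)) x"
      using e assms by (cases "x < 2") (auto simp: Q2_def lookup_add lookup_single when_def in_keys_iff less_2_cases_iff)
  qed
  then show ?thesis using single_even_AP[of 0 e0] single_even_AP[of 1 e1] by (simp add: sg_add)
qed


lemma mr_iff: "p \<in> monomial_ring M \<longleftrightarrow> Poly_Mapping.keys p \<subseteq> M"
  by (simp add: monomial_ring_def)

lemma mr_one: "0 \<in> M \<Longrightarrow> (1::'k::field mp) \<in> monomial_ring M"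
  by (simp add: mr_iff)

lemma mr_add: "p \<in> monomial_ring M \<Longrightarrow> q \<in> monomial_ring M \<Longrightarrow> p + q \<in> monomial_ring M"
  using keys_add[of p q] by (auto simp: mr_iff)

lemma mr_diff: "p \<in> monomial_ring M \<Longrightarrow> q \<in> monomial_ring M \<Longrightarrow> p - q \<in> monomial_ring M"
  using keys_diff[of p q] by (auto simp: mr_iff)

lemma mr_uminus: "p \<in> monomial_ring M \<Longrightarrow> - p \<in> monomial_ring M"
  by (simp add: mr_iff)

lemma mr_mult_sg:
  assumes "p \<in> monomial_ring (semigroup_gen G)" "q \<in> monomial_ring (semigroup_gen G)"
  shows "p * q \<in> monomial_ring (semigroup_gen G)"
  using keys_mult[of p q] assms by (auto simp: mr_iff intro: sg_add)

lemma mr_single: "a \<in> M \<Longrightarrow> Poly_Mapping.single a c \<in> monomial_ring M"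
  by (simp add: mr_iff)

lemma to_fract_is_Fract: "to_fract x = Fraction_Field.Fract x 1"
  by (simp add: to_fract_def)

lemma norm_unpack:
  assumes "z \<in> normalization R"
  obtains f g N c where "f \<in> R" "g \<in> R" "g \<noteq> 0" "z * to_fract g = to_fract f"
    "\<forall>i<N. c i \<in> R" "z^N + (\<Sum>i<N. to_fract (c i) * z^i) = 0"
proof -
  from assms obtain a b where ab: "z = Fraction_Field.Fract a b" "a \<in> R" "b \<in> R" "b \<noteq> 0"
    by (auto simp: normalization_def frac_field_def)
  from assms obtain N c where Nc: "\<forall>i<N. c i \<in> R" "z^N + (\<Sum>i<N. Fraction_Field.Fract (c i) 1 * z^i) = 0"
    by (auto simp: normalization_def integral_over_def)
  have "z * to_fract b = to_fract a"
    using ab by (simp add: to_fract_def mult_fract eq_fract)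
  then show ?thesis using that ab Nc by (simp add: to_fract_is_Fract)
qed

lemma norm_poly:
  fixes z :: "'k::field mp fract"
  assumes g: "g \<noteq> 0" and zg: "z * to_fract g = to_fract f" and int: "z^N + (\<Sum>i<N. to_fract (c i) * z^i) = 0"
  shows "\<exists>h. z = to_fract h \<and> h * g = f \<and> h^N + (\<Sum>i<N. c i * h^i) = 0"
proof -
  obtain h where h: "z = to_fract h" using S_normal[OF int g zg] by blast
  have "to_fract (h * g) = to_fract f" using zg h by simp
  then have hg: "h * g = f" by (simp only: to_fract_eq_iff)
  have "to_fract (h^N + (\<Sum>i<N. c i * h^i)) = 0"
    using int h by (simp add: to_fract_power)
  then have "h^N + (\<Sum>i<N. c i * h^i) = 0" by (simp only: to_fract_eq_0_iff)
  then show ?thesis using h hg by blast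
qed

lemma embed_in_norm:
  assumes M0: "0 \<in> M" and r: "r \<in> monomial_ring M"
  shows "Fraction_Field.Fract (r::'k::field mp) 1 \<in> normalization (monomial_ring M)"
proof -
  have "Fraction_Field.Fract r 1 \<in> frac_field (monomial_ring M)"
    unfolding frac_field_def using r mr_one[OF M0] by fastforce
  moreover have "integral_over (monomial_ring M) (Fraction_Field.Fract r 1)"
    unfolding integral_over_def
    by (rule exI[of _ 1], rule exI[of _ "\<lambda>_. - r"]) (simp add: r mr_uminus fract_collapse add_fract)
  ultimately show ?thesis by (simp add: normalization_def)
qed

lemma embed_sub_norm:
  "0 \<in> M \<Longrightarrow> embed (monomial_ring M :: 'k::field mp set) \<subseteq> normalization (monomial_ring M)"
  by (auto simp: embed_def intro: embed_in_norm)

lemma embed_mem: "h \<in> R \<Longrightarrow> to_fract h \<in> embed R"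
  by (simp add: embed_def to_fract_def)


definition QV :: "nat \<Rightarrow> nat \<Rightarrow> (nat \<Rightarrow>\<^sub>0 nat) \<Rightarrow> bool" where
  "QV n d a \<longleftrightarrow> Poly_Mapping.keys a \<subseteq> {..<n} \<and> d dvd total_deg n a"

lemma QV_props:
  shows "\<And>a b. QV n d a \<Longrightarrow> QV n d b \<Longrightarrow> QV n d (a+b)"
    and "\<And>a b. \<not> QV n d a \<Longrightarrow> QV n d b \<Longrightarrow> \<not> QV n d (a+b)"
  by (auto simp: QV_def keys_add_nat' total_deg_add dvd_add_left_iff)

lemma Q2_props:
  shows "\<And>a b. Q2 a \<Longrightarrow> Q2 b \<Longrightarrow> Q2 (a+b)"
    and "\<And>a b. \<not> Q2 a \<Longrightarrow> Q2 b \<Longrightarrow> \<not> Q2 (a+b)"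
  by (auto simp: Q2_def keys_add_nat' lookup_add)

lemma normal_special:
  "is_normal (pinched_veronese 2 2 (Poly_Mapping.single 0 1 + Poly_Mapping.single 1 1) :: 'k::field mp set)"
proof -
  define m :: "nat \<Rightarrow>\<^sub>0 nat" where "m = Poly_Mapping.single 0 1 + Poly_Mapping.single 1 1"
  define AP where "AP = semigroup_gen (T_exps 2 2 - {m})"
  have P: "pinched_veronese 2 2 m = (monomial_ring AP :: 'k mp set)"
    by (simp add: pinched_veronese_def AP_def)
  have "normalization (monomial_ring AP :: 'k mp set) \<subseteq> embed (monomial_ring AP)"
  proof
    fix z :: "'k mp fract" assume "z \<in> normalization (monomial_ring AP)"
    then obtain f g N c where u: "f \<in> monomial_ring AP" "g \<in> monomial_ring AP" "g \<noteq> 0"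
      "z * to_fract g = to_fract f" "\<forall>i<N. c i \<in> monomial_ring AP" "z^N + (\<Sum>i<N. to_fract (c i) * z^i) = 0"
      by (rule norm_unpack)
    obtain h where h: "z = to_fract h" "h * g = f" using norm_poly[OF u(3,4,6)] by blast
    have "\<forall>a\<in>Poly_Mapping.keys h. Q2 a"
      by (rule grading[where Q=Q2, OF Q2_props h(2) u(3)])
        (use u(1,2) special_AP_Q2 in \<open>auto simp: mr_iff AP_def m_def\<close>)
    then have "h \<in> monomial_ring AP" using Q2_AP by (auto simp: mr_iff AP_def m_def)
    then show "z \<in> embed (monomial_ring AP)" using h(1) by (simp add: embed_mem)
  qed
  moreover have "embed (monomial_ring AP :: 'k mp set) \<subseteq> normalization (monomial_ring AP)"
    by (rule embed_sub_norm) (simp add: AP_def semigroup_gen.zero)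
  ultimately show ?thesis unfolding is_normal_def m_def[symmetric] P by blast
qed

lemma normal_max_d:
  assumes n: "n \<ge> 2" and d: "d \<ge> 2" and m: "m \<in> T_exps n d" and mx: "max_exp n m = d"
  shows "is_normal (pinched_veronese n d m :: 'k::field mp set)"
proof -
  obtain i where i: "i < n" "m = Poly_Mapping.single i d" using max_eq_single[OF m mx n] by blast
  define AP where "AP = semigroup_gen (T_exps n d - {m})"
  have P: "pinched_veronese n d m = (monomial_ring AP :: 'k mp set)"
    by (simp add: pinched_veronese_def AP_def)
  have APQ: "\<And>a. a \<in> AP \<Longrightarrow> Poly_Mapping.keys a \<subseteq> {..<n} \<and> d dvd total_deg n a"
    unfolding AP_def by (rule sg_T, erule sg_mono[rotated]) blast
  have "normalization (monomial_ring AP :: 'k mp set) \<subseteq> embed (monomial_ring AP)"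
  proof
    fix z :: "'k mp fract" assume "z \<in> normalization (monomial_ring AP)"
    then obtain f g N c where u: "f \<in> monomial_ring AP" "g \<in> monomial_ring AP" "g \<noteq> 0"
      "z * to_fract g = to_fract f" "\<forall>i<N. c i \<in> monomial_ring AP" "z^N + (\<Sum>i<N. to_fract (c i) * z^i) = 0"
      by (rule norm_unpack)
    obtain h where h: "z = to_fract h" "h * g = f" "h^N + (\<Sum>i<N. c i * h^i) = 0"
      using norm_poly[OF u(3,4,6)] by blast
    have hQ: "\<forall>a\<in>Poly_Mapping.keys h. Poly_Mapping.keys a \<subseteq> {..<n} \<and> d dvd total_deg n a"
      by (rule grading[where Q="QV n d", OF QV_props h(2) u(3), unfolded QV_def]) (use u(1,2) APQ in \<open>auto simp: mr_iff\<close>)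
    define w where "w a = int (d * Poly_Mapping.lookup a i) - int ((d - 1) * total_deg n a)" for a
    have wadd: "\<And>a b. w (a + b) = w a + w b"
      by (simp add: w_def lookup_add total_deg_add algebra_simps)
    have wc: "\<And>j. j < N \<Longrightarrow> wle w 0 (c j)"
    proof -
      fix j assume "j < N"
      then have "Poly_Mapping.keys (c j) \<subseteq> AP" using u(5) by (simp add: mr_iff)
      show "wle w 0 (c j)" unfolding wle_def
      proof
        fix a assume "a \<in> Poly_Mapping.keys (c j)"
        then have "a \<in> semigroup_gen (T_exps n d - {Poly_Mapping.single i d})"
          using \<open>Poly_Mapping.keys (c j) \<subseteq> AP\<close> i(2) by (auto simp: AP_def)
        then have "d * Poly_Mapping.lookup a i \<le> (d - 1) * total_deg n a" by (rule AP_weight[OF _ i(1)])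
        then have "int (d * Poly_Mapping.lookup a i) \<le> int ((d - 1) * total_deg n a)" by (simp only: of_nat_le_iff)
        then show "w a \<le> 0" unfolding w_def by linarith
      qed
    qed
    have "wle w 0 h" by (rule weight_bound[OF wadd wc h(3)])
    have "\<forall>a\<in>Poly_Mapping.keys h. d * Poly_Mapping.lookup a i \<le> (d - 1) * total_deg n a"
    proof (intro ballI)
      fix a assume "a \<in> Poly_Mapping.keys h"
      then have "w a \<le> 0" using \<open>wle w 0 h\<close> by (simp add: wle_def)
      then have "int (d * Poly_Mapping.lookup a i) \<le> int ((d - 1) * total_deg n a)" unfolding w_def by linarith
      then show "d * Poly_Mapping.lookup a i \<le> (d - 1) * total_deg n a" by (simp only: of_nat_le_iff)
    qed
    then have "h \<in> monomial_ring AP"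
      using hQ AP_weight_conv[OF i(1)] d i(2) by (auto simp: mr_iff AP_def)
    then show "z \<in> embed (monomial_ring AP)" using h(1) by (simp add: embed_mem)
  qed
  moreover have "embed (monomial_ring AP :: 'k mp set) \<subseteq> normalization (monomial_ring AP)"
    by (rule embed_sub_norm) (simp add: AP_def semigroup_gen.zero)
  ultimately show ?thesis unfolding is_normal_def P by blast
qed


lemma norm_max_lt:
  assumes n: "n \<ge> 2" and d: "d \<ge> 2" and m: "m \<in> T_exps n d" and mx: "max_exp n m < d"
    and ns: "\<not> (n = 2 \<and> d = 2 \<and> m = Poly_Mapping.single 0 1 + Poly_Mapping.single 1 1)"
  shows "normalization (pinched_veronese n d m :: 'k::field mp set) = embed (veronese n d :: 'k mp set)"
proof -
  define AP where "AP = semigroup_gen (T_exps n d - {m})"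
  define A where "A = semigroup_gen (T_exps n d)"
  have P: "pinched_veronese n d m = (monomial_ring AP :: 'k mp set)"
    by (simp add: pinched_veronese_def AP_def)
  have V: "veronese n d = (monomial_ring A :: 'k mp set)"
    by (simp add: veronese_def A_def)
  have APA: "AP \<subseteq> A" unfolding AP_def A_def by (auto intro: sg_mono[rotated])
  have AQ: "\<And>a. a \<in> A \<Longrightarrow> Poly_Mapping.keys a \<subseteq> {..<n} \<and> d dvd total_deg n a"
    unfolding A_def by (rule sg_T)
  obtain i j where ij: "i < n" "j < n" "i \<noteq> j" "Poly_Mapping.lookup m i > 0" "Poly_Mapping.lookup m j > 0"
    using two_support[OF m mx n d] by blast
  have mm: "m + m \<in> AP" unfolding AP_def by (rule mm_AP[OF m ij])
  have "normalization (monomial_ring AP :: 'k mp set) \<subseteq> embed (monomial_ring A)"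
  proof
    fix z :: "'k mp fract" assume "z \<in> normalization (monomial_ring AP)"
    then obtain f g N c where u: "f \<in> monomial_ring AP" "g \<in> monomial_ring AP" "g \<noteq> 0"
      "z * to_fract g = to_fract f" "\<forall>i<N. c i \<in> monomial_ring AP" "z^N + (\<Sum>i<N. to_fract (c i) * z^i) = 0"
      by (rule norm_unpack)
    obtain h where h: "z = to_fract h" "h * g = f" using norm_poly[OF u(3,4,6)] by blast
    have hQ: "\<forall>a\<in>Poly_Mapping.keys h. Poly_Mapping.keys a \<subseteq> {..<n} \<and> d dvd total_deg n a"
      by (rule grading[where Q="QV n d", OF QV_props h(2) u(3), unfolded QV_def]) (use u(1,2) APA AQ in \<open>unfold mr_iff, blast+\<close>)
    then have "h \<in> monomial_ring A" using A_char[OF n d] by (auto simp: mr_iff A_def)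
    then show "z \<in> embed (monomial_ring A)" using h(1) by (simp add: embed_mem)
  qed
  moreover have "embed (monomial_ring A :: 'k mp set) \<subseteq> normalization (monomial_ring AP)"
  proof
    fix z :: "'k mp fract" assume "z \<in> embed (monomial_ring A)"
    then obtain v where v: "v \<in> monomial_ring A" "z = Fraction_Field.Fract v 1" by (auto simp: embed_def)
    define p where "p = restr (\<lambda>a. a \<in> AP) v"
    define r where "r = restr (\<lambda>a. a \<notin> AP) v"
    have vpr: "v = p + r"
      by (rule poly_mapping_eqI) (simp add: p_def r_def lookup_restr lookup_add)
    have pP: "p \<in> monomial_ring AP" by (auto simp: p_def mr_iff keys_restr)
    have rk: "\<And>a. a \<in> Poly_Mapping.keys r \<Longrightarrow> \<exists>b\<in>AP. a = m + b"
    proof -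
      fix a assume "a \<in> Poly_Mapping.keys r"
      then have "a \<in> A" "a \<notin> AP" using v(1) by (auto simp: r_def keys_restr mr_iff)
      then show "\<exists>b\<in>AP. a = m + b" using A_split[of a n d m] mm by (auto simp: A_def AP_def)
    qed
    define q where "q = (\<Sum>a\<in>Poly_Mapping.keys r. Poly_Mapping.single (a - m) (Poly_Mapping.lookup r a))"
    have qP: "q \<in> monomial_ring AP"
    proof -
      have "Poly_Mapping.keys q \<subseteq> (\<Union>a\<in>Poly_Mapping.keys r. Poly_Mapping.keys (Poly_Mapping.single (a - m) (Poly_Mapping.lookup r a)))"
        unfolding q_def by (rule keys_sum)
      also have "\<dots> \<subseteq> AP"
      proof
        fix x assume "x \<in> (\<Union>a\<in>Poly_Mapping.keys r. Poly_Mapping.keys (Poly_Mapping.single (a - m) (Poly_Mapping.lookup r a)))"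
        then obtain a where a: "a \<in> Poly_Mapping.keys r" "x \<in> Poly_Mapping.keys (Poly_Mapping.single (a - m) (Poly_Mapping.lookup r a))"
          by blast
        then have "x = a - m" by (auto split: if_splits)
        moreover obtain b where "b \<in> AP" "a = m + b" using rk[OF a(1)] by blast
        ultimately show "x \<in> AP" by simp
      qed
      finally show ?thesis by (simp add: mr_iff)
    qed
    have rq: "r = Poly_Mapping.single m 1 * q"
    proof -
      have "Poly_Mapping.single m 1 * q = (\<Sum>a\<in>Poly_Mapping.keys r. Poly_Mapping.single (m + (a - m)) (Poly_Mapping.lookup r a))"
        by (simp add: q_def sum_distrib_left mult_single)
      also have "\<dots> = (\<Sum>a\<in>Poly_Mapping.keys r. Poly_Mapping.single a (Poly_Mapping.lookup r a))"
      proof (rule sum.cong[OF refl])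
        fix x assume "x \<in> Poly_Mapping.keys r"
        then obtain b where "a = a" "x = m + b" using rk by blast
        then show "Poly_Mapping.single (m + (x - m)) (Poly_Mapping.lookup r x) = Poly_Mapping.single x (Poly_Mapping.lookup r x)"
          by simp
      qed
      also have "\<dots> = r" by (rule pm_sum_single[symmetric])
      finally show ?thesis by simp
    qed
    obtain k where k: "k < n" "Poly_Mapping.single k d \<in> AP" "m + Poly_Mapping.single k d \<in> AP"
      using exists_shift[OF m mx n d ns] unfolding AP_def by blast
    define u where "u = (Poly_Mapping.single (Poly_Mapping.single k d) 1 :: 'k mp)"
    have uP: "u \<in> monomial_ring AP" using k(2) by (simp add: u_def mr_single)
    have "Poly_Mapping.lookup u (Poly_Mapping.single k d) = 1" by (simp add: u_def)
    then have u0: "u \<noteq> 0" by auto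
    have vu: "v * u \<in> monomial_ring AP"
    proof -
      have "v * u = p * u + Poly_Mapping.single (m + Poly_Mapping.single k d) 1 * q"
      proof -
        have e: "Poly_Mapping.single (m + Poly_Mapping.single k d) (1::'k) = Poly_Mapping.single m 1 * u"
          by (simp add: u_def mult_single)
        show ?thesis unfolding e vpr rq by (simp add: algebra_simps)
      qed
      then show ?thesis using pP uP qP k(3)
        by (simp add: mr_add mr_mult_sg[unfolded AP_def[symmetric]] mr_single AP_def)
    qed
    have "z = Fraction_Field.Fract (v * u) u" using v(2) u0 by (simp add: eq_fract)
    then have zF: "z \<in> frac_field (monomial_ring AP)"
      unfolding frac_field_def using vu uP u0 by blast
    define c where "c i = (if i = 0 then p * p - Poly_Mapping.single (m + m) 1 * q * q else - (p + p))" for i :: nat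
    have cP: "\<forall>i<2. c i \<in> monomial_ring AP"
    proof -
      have s: "Poly_Mapping.single (m + m) (1::'k) \<in> monomial_ring AP" using mm by (rule mr_single)
      have h0: "p * p - Poly_Mapping.single (m + m) 1 * q * q \<in> monomial_ring AP"
        using s pP qP unfolding AP_def by (intro mr_diff mr_mult_sg)
      have h1: "- (p + p) \<in> monomial_ring AP"
        using pP by (intro mr_uminus mr_add)
      show ?thesis
      proof (intro allI impI)
        fix i :: nat assume "i < 2"
        show "c i \<in> monomial_ring AP"
        proof (cases "i = 0")
          case True then show ?thesis using h0 by (simp only: c_def simp_thms if_True)
        next
          case False then show ?thesis using h1 by (simp only: c_def if_False)
        qed
      qed
    qed
    have Sid: "v^2 + (c 0 + c 1 * v) = 0"
    proof -
      have "Poly_Mapping.single (m + m) (1::'k) = Poly_Mapping.single m 1 * Poly_Mapping.single m 1"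
        by (simp add: mult_single)
      then show ?thesis by (simp add: c_def vpr rq power2_eq_square algebra_simps)
    qed
    have "z^2 + (\<Sum>i<2. Fraction_Field.Fract (c i) 1 * z^i) = 0"
    proof -
      have "z^2 + (\<Sum>i<2. Fraction_Field.Fract (c i) 1 * z^i) = to_fract (v^2 + (c 0 + c 1 * v))"
        using v(2) by (simp add: numeral_2_eq_2 to_fract_is_Fract[symmetric] to_fract_power)
      also have "\<dots> = to_fract 0" by (simp only: Sid)
      finally show ?thesis by simp
    qed
    then have "integral_over (monomial_ring AP) z"
      unfolding integral_over_def using cP by blast
    with zF show "z \<in> normalization (monomial_ring AP)" by (simp add: normalization_def)
  qed
  ultimately show ?thesis unfolding P V by blast
qed

theorem theorem2p3:
  fixes n d :: nat and m :: "nat \<Rightarrow>\<^sub>0 nat"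
  assumes "n \<ge> 2" and "d \<ge> 2" and "m \<in> T_exps n d"
  shows "(n = 2 \<and> d = 2 \<and> m = Poly_Mapping.single 0 1 + Poly_Mapping.single 1 1 \<longrightarrow>
            is_normal (pinched_veronese n d m :: ((nat \<Rightarrow>\<^sub>0 nat) \<Rightarrow>\<^sub>0 'k::field) set))
       \<and> (\<not> (n = 2 \<and> d = 2 \<and> m = Poly_Mapping.single 0 1 + Poly_Mapping.single 1 1) \<longrightarrow>
            (max_exp n m < d \<longrightarrow>
               normalization (pinched_veronese n d m :: ((nat \<Rightarrow>\<^sub>0 nat) \<Rightarrow>\<^sub>0 'k) set)
                 = embed (veronese n d :: ((nat \<Rightarrow>\<^sub>0 nat) \<Rightarrow>\<^sub>0 'k) set))
          \<and> (max_exp n m = d \<longrightarrow>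
               is_normal (pinched_veronese n d m :: ((nat \<Rightarrow>\<^sub>0 nat) \<Rightarrow>\<^sub>0 'k) set)))"
  using normal_special norm_max_lt[OF assms] normal_max_d[OF assms] by blast


end
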